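(* Let $\mathfrak k$ be the maximal compact subalgebra of a Kac--Moody algebra over a field $F$ of characteristic $0$ with simply laced diagram, with Berman generators $X_1,\dots,X_n$, and let $\mathcal C$ be the class of generalized spin representations of $\mathfrak k$. Then: (a) $\mathcal C$ is closed under direct sums, quotients, duals (the dual of $\rho$ being $X\mapsto-\rho(X)^T$) and subrepresentations; (b) if $\rho_1,\rho_2,\rho_3\in\mathcal C$, then the assignment $X_i\mapsto 4\,\rho_1(X_i)\otimes\rho_2(X_i)\otimes\rho_3(X_i)$ defines a representation $\rho_4$ of $\mathfrak k$ which lies in $\mathcal C$; (c) if $\rho\in\mathcal C$ and $\varphi$ is a sign automorphism, a graph automorphism, or a Weyl group automorphism of $\mathfrak k$, then $\rho\circ\varphi\in\mathcal C$.
   Context: $L=F(I)$, $I^2=-1$. Berman's theorem: $\mathfrak k$ is the Lie algebra generated by $X_i=e_i-f_i$ with defining relations $[X_i,[X_i,X_j]]=-X_j$ for adjacent $v_i,v_j$ and $[X_i,X_j]=0$ for non-adjacent $i\ne j$. A generalized spin representation is a Lie algebra homomorphism $\rho:\mathfrak k\to\operatorname{End}(L^s)$ with $\rho(X_i)^2=-\tfrac14\mathrm{id}_s$ for all $i$. A sign automorphism is the automorphism $X_i\mapsto\epsilon_iX_i$ for fixed $\epsilon_i\in\{\pm1\}$. A graph automorphism is $X_i\mapsto X_{\pi(i)}$ for a permutation $\pi$ of the vertices preserving adjacency. A Weyl group automorphism is the restriction to $\mathfrak k$ of an element of the extended Weyl group $W^*=\langle s_i^*\rangle$, $s_i^*=\exp(\operatorname{ad}f_i)\exp(\operatorname{ad}(-e_i))\exp(\operatorname{ad}f_i)$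 (these commute with the Cartan--Chevalley involution and so preserve $\mathfrak k$). *)

theory Defs
  imports "Jordan_Normal_Form.Matrix"
begin

definition simply_laced :: "nat \<Rightarrow> (nat \<Rightarrow> nat \<Rightarrow> bool) \<Rightarrow> bool" where
  "simply_laced n adj \<longleftrightarrow> (\<forall>i<n. \<forall>j<n. adj i j \<longleftrightarrow> adj j i) \<and> (\<forall>i<n. \<not> adj i i)"

definition comm :: "'a::comm_ring mat \<Rightarrow> 'a mat \<Rightarrow> 'a mat" where
  "comm X Y = X * Y - Y * X"

text \<open>By Berman's theorem, a Lie algebra homomorphism from k to End(L^s) is the same as
an assignment X_i \<mapsto> A i of s\<times>s matrices satisfying the Berman relations.\<close>
definition berman_rep :: "nat \<Rightarrow> (nat \<Rightarrow> nat \<Rightarrow> bool) \<Rightarrow> nat \<Rightarrow> (nat \<Rightarrow> 'a::comm_ring_1 mat) \<Rightarrow> bool" where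
  "berman_rep n adj s A \<longleftrightarrow>
     (\<forall>i<n. A i \<in> carrier_mat s s) \<and>
     (\<forall>i<n. \<forall>j<n. adj i j \<longrightarrow> comm (A i) (comm (A i) (A j)) = - A j) \<and>
     (\<forall>i<n. \<forall>j<n. i \<noteq> j \<and> \<not> adj i j \<longrightarrow> comm (A i) (A j) = 0\<^sub>m s s)"

definition gen_spin :: "nat \<Rightarrow> (nat \<Rightarrow> nat \<Rightarrow> bool) \<Rightarrow> nat \<Rightarrow> (nat \<Rightarrow> 'a::field mat) \<Rightarrow> bool" where
  "gen_spin n adj s A \<longleftrightarrow> berman_rep n adj s A \<and>
     (\<forall>i<n. A i * A i = (- (1/4)) \<cdot>\<^sub>m 1\<^sub>m s)"

definition direct_sum_mat :: "'a::zero mat \<Rightarrow> 'a mat \<Rightarrow> 'a mat" where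
  "direct_sum_mat A B = four_block_mat A (0\<^sub>m (dim_row A) (dim_col B)) (0\<^sub>m (dim_row B) (dim_col A)) B"

definition kron :: "'a::times mat \<Rightarrow> 'a mat \<Rightarrow> 'a mat" where
  "kron A B = mat (dim_row A * dim_row B) (dim_col A * dim_col B)
     (\<lambda>(i, j). A $$ (i div dim_row B, j div dim_col B) * B $$ (i mod dim_row B, j mod dim_col B))"

text \<open>rho \<circ> s_i^* in terms of the images of the generators:
 s_i^*(X_i) = X_i, s_i^*(X_j) = -[X_i,X_j] for j adjacent to i, s_i^*(X_j) = X_j otherwise.\<close>
definition weyl_twist :: "(nat \<Rightarrow> nat \<Rightarrow> bool) \<Rightarrow> nat \<Rightarrow> (nat \<Rightarrow> 'a::comm_ring mat) \<Rightarrow> (nat \<Rightarrow> 'a mat)" where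
  "weyl_twist adj i A = (\<lambda>j. if j \<noteq> i \<and> adj i j then - comm (A i) (A j) else A j)"

end

theory Submission
  imports Defs
begin


lemma mat_eq_iff_sq:
  assumes "X \<in> carrier_mat s s" "Y \<in> carrier_mat s s"
  shows "X = Y \<longleftrightarrow> (\<forall>i<s. \<forall>j<s. X $$ (i,j) = Y $$ (i,j))"
  using assms by (auto intro!: eq_matI)

lemma key_pair:
  fixes a b :: "'a::field_char_0 mat"
  assumes a: "a \<in> carrier_mat s s" and b: "b \<in> carrier_mat s s"
    and sq: "a * a = (- (1/4)) \<cdot>\<^sub>m 1\<^sub>m s"
  shows "comm a (comm a b) = - b \<longleftrightarrow> a * b = - (b * a)"
proof -
  define P where "P = a * (b * a)"
  have P: "P \<in> carrier_mat s s" using a b by (simp add: P_def)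
  have aab: "a * (a * b) = (- (1/4)) \<cdot>\<^sub>m b"
  proof -
    have "a * (a * b) = (a * a) * b" using assoc_mult_mat[OF a a b] by simp
    also have "\<dots> = (- (1/4)) \<cdot>\<^sub>m (1\<^sub>m s * b)" unfolding sq by (rule mult_smult_assoc_mat[OF one_carrier_mat b])
    finally show ?thesis using left_mult_one_mat[OF b] by simp
  qed
  have baa: "(b * a) * a = (- (1/4)) \<cdot>\<^sub>m b"
  proof -
    have "(b * a) * a = b * (a * a)" using assoc_mult_mat[OF b a a] by simp
    also have "\<dots> = (- (1/4)) \<cdot>\<^sub>m (b * 1\<^sub>m s)" unfolding sq by (rule mult_smult_distrib[OF b one_carrier_mat])
    finally show ?thesis using right_mult_one_mat[OF b] by simp
  qed
  have aba: "(a * b) * a = P" unfolding P_def using a b by simp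
  have "comm a (comm a b) = (a * (a * b) - a * (b * a)) - ((a * b) * a - (b * a) * a)"
  proof -
    have ab: "a * b \<in> carrier_mat s s" and ba: "b * a \<in> carrier_mat s s" using a b by auto
    show ?thesis unfolding comm_def
      mult_minus_distrib_mat[OF a ab ba] minus_mult_distrib_mat[OF ab ba a] ..
  qed
  also have "\<dots> = ((- (1/4)) \<cdot>\<^sub>m b - P) - (P - (- (1/4)) \<cdot>\<^sub>m b)"
    using aab baa aba P_def by simp
  finally have c: "comm a (comm a b) = ((- (1/4)) \<cdot>\<^sub>m b - P) - (P - (- (1/4)) \<cdot>\<^sub>m b)" .
  have step1: "comm a (comm a b) = - b \<longleftrightarrow> P = (1/4) \<cdot>\<^sub>m b"
  proof -
    have cL: "((- (1/4)) \<cdot>\<^sub>m b - P) - (P - (- (1/4)) \<cdot>\<^sub>m b) \<in> carrier_mat s s"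
      using P b by (simp add: minus_carrier_mat)
    have pt: "\<And>x y :: 'a. ((- (1/4)) * y - x - (x - (- (1/4)) * y) = - y) \<longleftrightarrow> x = (1/4) * y"
      by (auto simp: field_simps)
    show ?thesis unfolding c mat_eq_iff_sq[OF cL uminus_carrier_mat[OF b]]
      mat_eq_iff_sq[OF P smult_carrier_mat[OF b]]
      using carrier_matD[OF P] carrier_matD[OF b] pt by simp
  qed
  have aP: "a * P = (- (1/4)) \<cdot>\<^sub>m (b * a)"
  proof -
    have ba: "b * a \<in> carrier_mat s s" using a b by simp
    have "a * P = (a * a) * (b * a)" unfolding P_def using assoc_mult_mat[OF a a ba] by simp
    also have "\<dots> = (- (1/4)) \<cdot>\<^sub>m (1\<^sub>m s * (b * a))" unfolding sq by (rule mult_smult_assoc_mat[OF one_carrier_mat ba])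
    finally show ?thesis using left_mult_one_mat[OF ba] by simp
  qed
  have step2: "P = (1/4) \<cdot>\<^sub>m b \<longleftrightarrow> a * b = - (b * a)"
  proof
    assume h: "P = (1/4) \<cdot>\<^sub>m b"
    have "(- (1/4)) \<cdot>\<^sub>m (b * a) = (1/4) \<cdot>\<^sub>m (a * b)"
      using aP h a b by (simp add: mult_smult_distrib)
    note E = this
    have ab: "a * b \<in> carrier_mat s s" and ba: "b * a \<in> carrier_mat s s" using a b by auto
    have e: "\<forall>i<s. \<forall>j<s. (- (1/4)) * (b * a) $$ (i,j) = (1/4) * (a * b) $$ (i,j)"
      using E[unfolded mat_eq_iff_sq[OF smult_carrier_mat[OF ba] smult_carrier_mat[OF ab]]]
        carrier_matD[OF ab] carrier_matD[OF ba] by simp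
    have pt2: "\<And>x y :: 'a. (- (1/4)) * x = (1/4) * y \<Longrightarrow> y = - x"
      by (auto simp: field_simps)
    have e2: "\<forall>i<s. \<forall>j<s. (a * b) $$ (i,j) = - ((b * a) $$ (i,j))" using e pt2 by blast
    show "a * b = - (b * a)" unfolding mat_eq_iff_sq[OF ab uminus_carrier_mat[OF ba]]
      using e2 carrier_matD[OF ab] carrier_matD[OF ba] by simp
  next
    assume h: "a * b = - (b * a)"
    have "P = (a * b) * a" using aba by simp
    also have "\<dots> = - ((b * a) * a)" using h a b by simp
    also have "\<dots> = (1/4) \<cdot>\<^sub>m b" unfolding baa
      mat_eq_iff_sq[OF uminus_carrier_mat[OF smult_carrier_mat[OF b]] smult_carrier_mat[OF b]]
      using carrier_matD[OF b] by simp
    finally show "P = (1/4) \<cdot>\<^sub>m b" .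
  qed
  show ?thesis using step1 step2 by simp
qed


lemma comm_zero_iff:
  fixes a b :: "'a::comm_ring mat"
  assumes a: "a \<in> carrier_mat s s" and b: "b \<in> carrier_mat s s"
  shows "comm a b = 0\<^sub>m s s \<longleftrightarrow> a * b = b * a"
proof -
  have c1: "a * b \<in> carrier_mat s s" "b * a \<in> carrier_mat s s" using a b by auto
  have c2: "a * b - b * a \<in> carrier_mat s s" using c1 by (simp add: minus_carrier_mat)
  show ?thesis unfolding comm_def
  proof
    assume h: "a * b - b * a = 0\<^sub>m s s"
    show "a * b = b * a" unfolding mat_eq_iff_sq[OF c1]
    proof (intro allI impI)
      fix i j assume i: "i < s" and j: "j < s"
      have "(a * b - b * a) $$ (i,j) = 0" using h i j by simp
      then show "(a * b) $$ (i,j) = (b * a) $$ (i,j)" using i j carrier_matD[OF c1(1)] carrier_matD[OF c1(2)] by simp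
    qed
  next
    assume h: "a * b = b * a"
    show "a * b - b * a = 0\<^sub>m s s" unfolding h using c1 by (intro eq_matI) auto
  qed
qed

lemma scal_one_comm:
  fixes Q :: "'a::comm_ring_1 mat"
  assumes Q: "Q \<in> carrier_mat t s"
  shows "Q * (k \<cdot>\<^sub>m 1\<^sub>m s) = (k \<cdot>\<^sub>m 1\<^sub>m t) * Q"
  using Q by (simp add: mult_smult_distrib[OF Q one_carrier_mat] mult_smult_assoc_mat[OF one_carrier_mat Q])

definition sp :: "nat \<Rightarrow> (nat \<Rightarrow> nat \<Rightarrow> bool) \<Rightarrow> nat \<Rightarrow> (nat \<Rightarrow> 'a::field mat) \<Rightarrow> bool" where
  "sp n adj s A \<longleftrightarrow> (\<forall>i<n. A i \<in> carrier_mat s s) \<and>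
     (\<forall>i<n. A i * A i = (- (1/4)) \<cdot>\<^sub>m 1\<^sub>m s) \<and>
     (\<forall>i<n. \<forall>j<n. adj i j \<longrightarrow> A i * A j = - (A j * A i)) \<and>
     (\<forall>i<n. \<forall>j<n. i \<noteq> j \<and> \<not> adj i j \<longrightarrow> A i * A j = A j * A i)"

lemma gen_spin_iff:
  fixes A :: "nat \<Rightarrow> 'a::field_char_0 mat"
  shows "gen_spin n adj s A \<longleftrightarrow> sp n adj s A"
  unfolding gen_spin_def berman_rep_def sp_def
  using key_pair comm_zero_iff by (smt (verit))

lemma right_inverse_mat:
  fixes Q :: "'a::field mat"
  assumes Q: "Q \<in> carrier_mat t s" and surj: "\<forall>w \<in> carrier_vec t. \<exists>v \<in> carrier_vec s. Q *\<^sub>v v = w"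
  shows "\<exists>R \<in> carrier_mat s t. Q * R = 1\<^sub>m t"
proof -
  have ex: "\<forall>j. \<exists>v. j < t \<longrightarrow> v \<in> carrier_vec s \<and> Q *\<^sub>v v = unit_vec t j"
  proof
    fix j
    have "\<exists>v \<in> carrier_vec s. Q *\<^sub>v v = unit_vec t j" using surj unit_vec_carrier[of t j] by (rule bspec)
    then show "\<exists>v. j < t \<longrightarrow> v \<in> carrier_vec s \<and> Q *\<^sub>v v = unit_vec t j" by blast
  qed
  from choice[OF ex] obtain f where f0: "\<forall>j. j < t \<longrightarrow> f j \<in> carrier_vec s \<and> Q *\<^sub>v f j = unit_vec t j"
    by blast
  have f: "\<And>j. j < t \<Longrightarrow> f j \<in> carrier_vec s \<and> Q *\<^sub>v f j = unit_vec t j" using f0 by blast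
  define R where "R = mat s t (\<lambda>(i,j). f j $ i)"
  have R: "R \<in> carrier_mat s t" unfolding R_def by (rule mat_carrier)
  have colR: "\<And>j. j < t \<Longrightarrow> col R j = f j"
  proof -
    fix j assume j: "j < t"
    have fj: "dim_vec (f j) = s" by (rule carrier_vecD[OF conjunct1[OF f[OF j]]])
    show "col R j = f j" unfolding R_def
      apply (subst col_mat, rule j)
      apply (rule eq_vecI)
       apply (simp add: fj)
      apply (simp add: fj)
      done
  qed
  have "Q * R = 1\<^sub>m t"
  proof (rule eq_matI)
    fix i j assume i: "i < dim_row (1\<^sub>m t)" and j: "j < dim_col (1\<^sub>m t)"
    have "(Q * R) $$ (i,j) = row Q i \<bullet> col R j" using Q R i j by simp
    also have "\<dots> = (Q *\<^sub>v f j) $ i" using Q i j colR by simp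
    also have "\<dots> = 1\<^sub>m t $$ (i,j)" using f i j by simp
    finally show "(Q * R) $$ (i,j) = 1\<^sub>m t $$ (i,j)" .
  qed (use Q R in auto)
  then show ?thesis using R by blast
qed

lemma cancel_right:
  fixes Q :: "'a::field mat"
  assumes Q: "Q \<in> carrier_mat t s" and surj: "\<forall>w \<in> carrier_vec t. \<exists>v \<in> carrier_vec s. Q *\<^sub>v v = w"
    and X: "X \<in> carrier_mat t t" and Y: "Y \<in> carrier_mat t t" and e: "X * Q = Y * Q"
  shows "X = Y"
proof -
  obtain R where R: "R \<in> carrier_mat s t" "Q * R = 1\<^sub>m t" using right_inverse_mat[OF Q surj] by blast
  have "X = X * (Q * R)" using X R by simp
  also have "\<dots> = (X * Q) * R" using X Q R by simp
  also have "\<dots> = (Y * Q) * R" using e by simp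
  also have "\<dots> = Y * (Q * R)" using Y Q R by simp
  also have "\<dots> = Y" using Y R by simp
  finally show ?thesis .
qed

lemma cancel_left:
  fixes P :: "'a::field mat"
  assumes P: "P \<in> carrier_mat s t" and inj: "\<forall>v \<in> carrier_vec t. P *\<^sub>v v = 0\<^sub>v s \<longrightarrow> v = 0\<^sub>v t"
    and X: "X \<in> carrier_mat t t" and Y: "Y \<in> carrier_mat t t" and e: "P * X = P * Y"
  shows "X = Y"
proof (rule eq_matI)
  fix i j assume i: "i < dim_row Y" and j: "j < dim_col Y"
  have cX: "col X j \<in> carrier_vec t" and cY: "col Y j \<in> carrier_vec t" using X Y j by auto
  have "P *\<^sub>v col X j = P *\<^sub>v col Y j"
    using col_mult2[OF P X, of j] col_mult2[OF P Y, of j] e j Y by simp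
  hence "P *\<^sub>v (col X j - col Y j) = 0\<^sub>v s"
    using P cX cY by (simp add: mult_minus_distrib_mat_vec)
  hence "col X j - col Y j = 0\<^sub>v t" using inj cX cY by simp
  hence "(col X j - col Y j) $ i = 0" using i Y by simp
  then show "X $$ (i,j) = Y $$ (i,j)" using i j X Y by simp
qed (use X Y in auto)

lemma sp_quot:
  fixes A :: "nat \<Rightarrow> 'a::field mat"
  assumes A: "sp n adj s A" and Q: "Q \<in> carrier_mat t s"
    and surj: "\<forall>w \<in> carrier_vec t. \<exists>v \<in> carrier_vec s. Q *\<^sub>v v = w"
    and B: "\<forall>i<n. B i \<in> carrier_mat t t \<and> Q * A i = B i * Q"
  shows "sp n adj t B"
proof -
  have Ac: "\<And>i. i < n \<Longrightarrow> A i \<in> carrier_mat s s" using A by (simp add: sp_def)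
  have Bc: "\<And>i. i < n \<Longrightarrow> B i \<in> carrier_mat t t" using B by simp
  have BBQ: "\<And>i j. i < n \<Longrightarrow> j < n \<Longrightarrow> (B i * B j) * Q = Q * (A i * A j)"
  proof -
    fix i j assume i: "i < n" and j: "j < n"
    note c = Bc[OF i] Bc[OF j] Ac[OF i] Ac[OF j] Q
    have "(B i * B j) * Q = B i * (B j * Q)" using c by (metis assoc_mult_mat)
    also have "\<dots> = B i * (Q * A j)" using B j by simp
    also have "\<dots> = (B i * Q) * A j" using c by (metis assoc_mult_mat)
    also have "\<dots> = (Q * A i) * A j" using B i by simp
    also have "\<dots> = Q * (A i * A j)" using c by (metis assoc_mult_mat)
    finally show "(B i * B j) * Q = Q * (A i * A j)" .
  qed
  have canc: "\<And>X Y. X \<in> carrier_mat t t \<Longrightarrow> Y \<in> carrier_mat t t \<Longrightarrow> X * Q = Y * Q \<Longrightarrow> X = Y"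
    using cancel_right[OF Q surj] by blast
  show ?thesis unfolding sp_def
  proof (intro conjI allI impI)
    fix i assume i: "i < n"
    show "B i \<in> carrier_mat t t" using Bc i .
    have "(B i * B i) * Q = Q * ((- (1/4)) \<cdot>\<^sub>m 1\<^sub>m s)"
      using BBQ[OF i i] A i unfolding sp_def by simp
    then have "(B i * B i) * Q = ((- (1/4)) \<cdot>\<^sub>m 1\<^sub>m t) * Q" using scal_one_comm[OF Q] by simp
    note e = this
    show "B i * B i = (- (1/4)) \<cdot>\<^sub>m 1\<^sub>m t" by (rule canc[OF _ _ e]) (use Bc[OF i] in auto)
  next
    fix i j assume i: "i < n" and j: "j < n" and ad: "adj i j"
    have e0: "A i * A j = - (A j * A i)" using A i j ad unfolding sp_def by blast
    have c1: "A j * A i \<in> carrier_mat s s" "B j * B i \<in> carrier_mat t t" using Ac[OF i] Ac[OF j] Bc[OF i] Bc[OF j] by auto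
    have "(B i * B j) * Q = Q * (- (A j * A i))" using BBQ[OF i j] e0 by simp
    also have "\<dots> = - (Q * (A j * A i))" by (rule uminus_mult_right_mat) (use Q c1 in \<open>metis carrier_matD\<close>)
    also have "\<dots> = - ((B j * B i) * Q)" using BBQ[OF j i] by simp
    also have "\<dots> = (- (B j * B i)) * Q" by (rule sym, rule uminus_mult_left_mat) (use Q c1 in \<open>metis carrier_matD\<close>)
    finally have "(B i * B j) * Q = (- (B j * B i)) * Q" .
    note e = this
    show "B i * B j = - (B j * B i)" by (rule canc[OF _ _ e]) (use Bc[OF i] Bc[OF j] in auto)
  next
    fix i j assume i: "i < n" and j: "j < n" and ad: "i \<noteq> j \<and> \<not> adj i j"
    have "(B i * B j) * Q = (B j * B i) * Q"
      using BBQ[OF i j] BBQ[OF j i] A i j ad unfolding sp_def by metis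
    note e = this
    show "B i * B j = B j * B i" by (rule canc[OF _ _ e]) (use Bc[OF i] Bc[OF j] in auto)
  qed
qed

lemma sp_sub:
  fixes A :: "nat \<Rightarrow> 'a::field mat"
  assumes A: "sp n adj s A" and P: "P \<in> carrier_mat s t"
    and inj: "\<forall>v \<in> carrier_vec t. P *\<^sub>v v = 0\<^sub>v s \<longrightarrow> v = 0\<^sub>v t"
    and B: "\<forall>i<n. B i \<in> carrier_mat t t \<and> A i * P = P * B i"
  shows "sp n adj t B"
proof -
  have Ac: "\<And>i. i < n \<Longrightarrow> A i \<in> carrier_mat s s" using A by (simp add: sp_def)
  have Bc: "\<And>i. i < n \<Longrightarrow> B i \<in> carrier_mat t t" using B by simp
  have PBB: "\<And>i j. i < n \<Longrightarrow> j < n \<Longrightarrow> P * (B i * B j) = (A i * A j) * P"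
  proof -
    fix i j assume i: "i < n" and j: "j < n"
    note c = Bc[OF i] Bc[OF j] Ac[OF i] Ac[OF j] P
    have "P * (B i * B j) = (P * B i) * B j" using c by (metis assoc_mult_mat)
    also have "\<dots> = (A i * P) * B j" using B i by simp
    also have "\<dots> = A i * (P * B j)" using c by (metis assoc_mult_mat)
    also have "\<dots> = A i * (A j * P)" using B j by simp
    also have "\<dots> = (A i * A j) * P" using c by (metis assoc_mult_mat)
    finally show "P * (B i * B j) = (A i * A j) * P" .
  qed
  have canc: "\<And>X Y. X \<in> carrier_mat t t \<Longrightarrow> Y \<in> carrier_mat t t \<Longrightarrow> P * X = P * Y \<Longrightarrow> X = Y"
    using cancel_left[OF P inj] by blast
  show ?thesis unfolding sp_def
  proof (intro conjI allI impI)
    fix i assume i: "i < n"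
    show "B i \<in> carrier_mat t t" using Bc i .
    have "P * (B i * B i) = ((- (1/4)) \<cdot>\<^sub>m 1\<^sub>m s) * P"
      using PBB[OF i i] A i unfolding sp_def by simp
    then have "P * (B i * B i) = P * ((- (1/4)) \<cdot>\<^sub>m 1\<^sub>m t)" using scal_one_comm[OF P] by simp
    note e = this
    show "B i * B i = (- (1/4)) \<cdot>\<^sub>m 1\<^sub>m t" by (rule canc[OF _ _ e]) (use Bc[OF i] in auto)
  next
    fix i j assume i: "i < n" and j: "j < n" and ad: "adj i j"
    have e0: "A i * A j = - (A j * A i)" using A i j ad unfolding sp_def by blast
    have c1: "A j * A i \<in> carrier_mat s s" "B j * B i \<in> carrier_mat t t" using Ac[OF i] Ac[OF j] Bc[OF i] Bc[OF j] by auto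
    have "P * (B i * B j) = (- (A j * A i)) * P" using PBB[OF i j] e0 by simp
    also have "\<dots> = - ((A j * A i) * P)" by (rule uminus_mult_left_mat) (use P c1 in \<open>metis carrier_matD\<close>)
    also have "\<dots> = - (P * (B j * B i))" using PBB[OF j i] by simp
    also have "\<dots> = P * (- (B j * B i))" by (rule sym, rule uminus_mult_right_mat) (use P c1 in \<open>metis carrier_matD\<close>)
    finally have "P * (B i * B j) = P * (- (B j * B i))" .
    note e = this
    show "B i * B j = - (B j * B i)" by (rule canc[OF _ _ e]) (use Bc[OF i] Bc[OF j] in auto)
  next
    fix i j assume i: "i < n" and j: "j < n" and ad: "i \<noteq> j \<and> \<not> adj i j"
    have "P * (B i * B j) = P * (B j * B i)"
      using PBB[OF i j] PBB[OF j i] A i j ad unfolding sp_def by metis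
    note e = this
    show "B i * B j = B j * B i" by (rule canc[OF _ _ e]) (use Bc[OF i] Bc[OF j] in auto)
  qed
qed

lemma sp_dual:
  fixes A :: "nat \<Rightarrow> 'a::field mat"
  assumes A: "sp n adj s A"
  shows "sp n adj s (\<lambda>i. - transpose_mat (A i))"
proof -
  have Ac: "\<And>i. i < n \<Longrightarrow> A i \<in> carrier_mat s s" using A by (simp add: sp_def)
  have TT: "\<And>i j. i < n \<Longrightarrow> j < n \<Longrightarrow>
     (- transpose_mat (A i)) * (- transpose_mat (A j)) = transpose_mat (A j * A i)"
  proof -
    fix i j assume i: "i < n" and j: "j < n"
    show "(- transpose_mat (A i)) * (- transpose_mat (A j)) = transpose_mat (A j * A i)"
      using transpose_mult[OF Ac[OF j] Ac[OF i]] Ac[OF i] Ac[OF j] by (simp add: carrier_matD)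
  qed
  show ?thesis unfolding sp_def
  proof (intro conjI allI impI)
    fix i assume i: "i < n"
    show "- transpose_mat (A i) \<in> carrier_mat s s" using Ac i by simp
    show "(- transpose_mat (A i)) * (- transpose_mat (A i)) = (- (1/4)) \<cdot>\<^sub>m 1\<^sub>m s"
      unfolding TT[OF i i] using A i by (auto simp: sp_def)
  next
    fix i j assume i: "i < n" and j: "j < n" and ad: "adj i j"
    have e: "A i * A j = - (A j * A i)" using A i j ad unfolding sp_def by blast
    have e2: "A j * A i = - (A i * A j)" using e by simp
    show "(- transpose_mat (A i)) * (- transpose_mat (A j)) =
        - ((- transpose_mat (A j)) * (- transpose_mat (A i)))"
      unfolding TT[OF i j] TT[OF j i] e2 by (simp add: transpose_uminus)
  next
    fix i j assume i: "i < n" and j: "j < n" and ad: "i \<noteq> j \<and> \<not> adj i j"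
    have e: "A i * A j = A j * A i" using A i j ad unfolding sp_def by blast
    show "(- transpose_mat (A i)) * (- transpose_mat (A j)) =
        (- transpose_mat (A j)) * (- transpose_mat (A i))"
      unfolding TT[OF i j] TT[OF j i] e by simp
  qed
qed

lemma smult_mult_both:
  fixes a b :: "'a::comm_ring mat"
  assumes "a \<in> carrier_mat s s" "b \<in> carrier_mat s s"
  shows "(x \<cdot>\<^sub>m a) * (y \<cdot>\<^sub>m b) = (x * y) \<cdot>\<^sub>m (a * b)"
proof -
  have "(x \<cdot>\<^sub>m a) * (y \<cdot>\<^sub>m b) = x \<cdot>\<^sub>m (a * (y \<cdot>\<^sub>m b))"
    using mult_smult_assoc_mat[OF assms(1) smult_carrier_mat[OF assms(2)]] by simp
  also have "\<dots> = x \<cdot>\<^sub>m (y \<cdot>\<^sub>m (a * b))" using mult_smult_distrib[OF assms] by simp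
  also have "\<dots> = (x * y) \<cdot>\<^sub>m (a * b)" by (rule eq_matI) (auto simp: mult.assoc)
  finally show ?thesis .
qed

lemma one_smult_mat[simp]: "(1::'a::semiring_1) \<cdot>\<^sub>m X = X"
  by (rule eq_matI) auto

lemma sp_sign:
  fixes A :: "nat \<Rightarrow> 'a::field mat"
  assumes A: "sp n adj s A" and eps: "\<forall>i<n. \<epsilon> i = 1 \<or> \<epsilon> i = - 1"
  shows "sp n adj s (\<lambda>i. \<epsilon> i \<cdot>\<^sub>m A i)"
proof -
  have Ac: "\<And>i. i < n \<Longrightarrow> A i \<in> carrier_mat s s" using A by (simp add: sp_def)
  have sq: "\<And>i. i < n \<Longrightarrow> \<epsilon> i * \<epsilon> i = 1" using eps by auto
  show ?thesis unfolding sp_def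
  proof (intro conjI allI impI)
    fix i assume i: "i < n"
    show "\<epsilon> i \<cdot>\<^sub>m A i \<in> carrier_mat s s" using Ac i by simp
    show "(\<epsilon> i \<cdot>\<^sub>m A i) * (\<epsilon> i \<cdot>\<^sub>m A i) = (- (1/4)) \<cdot>\<^sub>m 1\<^sub>m s"
      using smult_mult_both[OF Ac[OF i] Ac[OF i]] sq[OF i] A i by (simp add: sp_def)
  next
    fix i j assume i: "i < n" and j: "j < n" and ad: "adj i j"
    have e: "A i * A j = - (A j * A i)" using A i j ad unfolding sp_def by blast
    show "(\<epsilon> i \<cdot>\<^sub>m A i) * (\<epsilon> j \<cdot>\<^sub>m A j) = - ((\<epsilon> j \<cdot>\<^sub>m A j) * (\<epsilon> i \<cdot>\<^sub>m A i))"
      unfolding smult_mult_both[OF Ac[OF i] Ac[OF j]] smult_mult_both[OF Ac[OF j] Ac[OF i]] e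
      using Ac i j by (auto simp: mat_eq_iff_sq[of _ s] mult.commute)
  next
    fix i j assume i: "i < n" and j: "j < n" and ad: "i \<noteq> j \<and> \<not> adj i j"
    have e: "A i * A j = A j * A i" using A i j ad unfolding sp_def by blast
    show "(\<epsilon> i \<cdot>\<^sub>m A i) * (\<epsilon> j \<cdot>\<^sub>m A j) = (\<epsilon> j \<cdot>\<^sub>m A j) * (\<epsilon> i \<cdot>\<^sub>m A i)"
      unfolding smult_mult_both[OF Ac[OF i] Ac[OF j]] smult_mult_both[OF Ac[OF j] Ac[OF i]] e
      by (simp add: mult.commute)
  qed
qed

lemma sp_graph:
  fixes A :: "nat \<Rightarrow> 'a::field mat"
  assumes A: "sp n adj s A" and b: "bij_betw \<pi> {0..<n} {0..<n}"
    and ad: "\<forall>i<n. \<forall>j<n. adj (\<pi> i) (\<pi> j) \<longleftrightarrow> adj i j"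
  shows "sp n adj s (\<lambda>i. A (\<pi> i))"
proof -
  have r: "\<And>i. i < n \<Longrightarrow> \<pi> i < n" using b by (auto simp: bij_betw_def)
  have inj: "\<And>i j. i < n \<Longrightarrow> j < n \<Longrightarrow> \<pi> i = \<pi> j \<Longrightarrow> i = j"
    using b by (auto simp: bij_betw_def inj_on_def)
  have Ac: "\<And>i. i < n \<Longrightarrow> A i \<in> carrier_mat s s" using A by (simp add: sp_def)
  show ?thesis unfolding sp_def
  proof (intro conjI allI impI)
    fix i assume i: "i < n"
    show "A (\<pi> i) \<in> carrier_mat s s" using Ac r i by blast
    show "A (\<pi> i) * A (\<pi> i) = (- (1/4)) \<cdot>\<^sub>m 1\<^sub>m s" using A r[OF i] unfolding sp_def by blast
  next
    fix i j assume i: "i < n" and j: "j < n" and a: "adj i j"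
    have "adj (\<pi> i) (\<pi> j)" using ad i j a by blast
    then show "A (\<pi> i) * A (\<pi> j) = - (A (\<pi> j) * A (\<pi> i))"
      using A r[OF i] r[OF j] unfolding sp_def by blast
  next
    fix i j assume i: "i < n" and j: "j < n" and a: "i \<noteq> j \<and> \<not> adj i j"
    have "\<pi> i \<noteq> \<pi> j \<and> \<not> adj (\<pi> i) (\<pi> j)" using ad i j a inj by blast
    then show "A (\<pi> i) * A (\<pi> j) = A (\<pi> j) * A (\<pi> i)"
      using A r[OF i] r[OF j] unfolding sp_def by blast
  qed
qed



lemma sum_reindex_mult:
  fixes f :: "nat \<Rightarrow> 'a::comm_monoid_add"
  shows "(\<Sum>l\<in>{0..<m*p}. f l) = (\<Sum>u\<in>{0..<m}. \<Sum>v\<in>{0..<p}. f (u*p+v))"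
proof -
  have "(\<Sum>l\<in>{0..<m*p}. f l) = (\<Sum>(u,v)\<in>{0..<m}\<times>{0..<p}. f (u*p+v))"
  proof (rule sum.reindex_bij_witness[where i="\<lambda>(u,v). u*p+v" and j="\<lambda>l. (l div p, l mod p)"])
    fix l assume l: "l \<in> {0..<m*p}"
    then have p: "p > 0" by (cases p) auto
    show "(case (l div p, l mod p) of (u, v) \<Rightarrow> u * p + v) = l" by simp
    show "(l div p, l mod p) \<in> {0..<m}\<times>{0..<p}"
      using l p by (auto simp: less_mult_imp_div_less)
    show "(case (l div p, l mod p) of (u, v) \<Rightarrow> f (u * p + v)) = f l" by simp
  next
    fix a assume a: "a \<in> {0..<m}\<times>{0..<p}"
    obtain u v where uv: "a = (u,v)" "u < m" "v < p" using a by auto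
    have lt: "u * p + v < m * p"
    proof -
      have "u * p + v < u * p + p" using uv by simp
      also have "\<dots> = (u+1) * p" by simp
      also have "\<dots> \<le> m * p" using uv by (intro mult_right_mono) auto
      finally show ?thesis .
    qed
    show "(case a of (u, v) \<Rightarrow> u * p + v) \<in> {0..<m*p}" using uv lt by simp
    show "((case a of (u, v) \<Rightarrow> u * p + v) div p, (case a of (u, v) \<Rightarrow> u * p + v) mod p) = a"
      using uv by simp
  qed
  also have "\<dots> = (\<Sum>u\<in>{0..<m}. \<Sum>v\<in>{0..<p}. f (u*p+v))"
    by (rule sum.cartesian_product[symmetric])
  finally show ?thesis .
qed

lemma kron_carrier[simp]: "kron A B \<in> carrier_mat (dim_row A * dim_row B) (dim_col A * dim_col B)"
  unfolding kron_def by simp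

lemma kron_carrier_sq:
  "A \<in> carrier_mat m m \<Longrightarrow> B \<in> carrier_mat p p \<Longrightarrow> kron A B \<in> carrier_mat (m*p) (m*p)"
  using kron_carrier[of A B] by (simp add: carrier_matD)

lemma kron_index:
  assumes "A \<in> carrier_mat m m" "B \<in> carrier_mat p p" "i < m*p" "j < m*p"
  shows "kron A B $$ (i,j) = A $$ (i div p, j div p) * B $$ (i mod p, j mod p)"
  using assms unfolding kron_def by (simp add: carrier_matD)

lemma kron_mult:
  fixes A C B D :: "'a::comm_ring_1 mat"
  assumes A: "A \<in> carrier_mat m m" and C: "C \<in> carrier_mat m m"
    and B: "B \<in> carrier_mat p p" and D: "D \<in> carrier_mat p p"
  shows "kron A B * kron C D = kron (A * C) (B * D)"
proof (rule eq_matI)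
  have AC: "A * C \<in> carrier_mat m m" and BD: "B * D \<in> carrier_mat p p" using A B C D by auto
  note kAB = kron_carrier_sq[OF A B] and kCD = kron_carrier_sq[OF C D] and kACBD = kron_carrier_sq[OF AC BD]
  show "dim_row (kron A B * kron C D) = dim_row (kron (A * C) (B * D))"
    using kAB kACBD by (simp add: carrier_matD)
  show "dim_col (kron A B * kron C D) = dim_col (kron (A * C) (B * D))"
    using kCD kACBD by (simp add: carrier_matD)
  fix i j assume i': "i < dim_row (kron (A * C) (B * D))" and j': "j < dim_col (kron (A * C) (B * D))"
  have i: "i < m * p" and j: "j < m * p" using i' j' kACBD by (auto simp: carrier_matD)
  then have p: "p > 0" by (cases p) auto
  have id: "i div p < m" "j div p < m" using i j p by (auto simp: less_mult_imp_div_less)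
  have im: "i mod p < p" "j mod p < p" using p by auto
  have "(kron A B * kron C D) $$ (i,j) = (\<Sum>l\<in>{0..<m*p}. kron A B $$ (i,l) * kron C D $$ (l,j))"
    using kAB kCD i j by (simp add: carrier_matD scalar_prod_def)
  also have "\<dots> = (\<Sum>l\<in>{0..<m*p}. (A $$ (i div p, l div p) * B $$ (i mod p, l mod p)) *
       (C $$ (l div p, j div p) * D $$ (l mod p, j mod p)))"
    by (rule sum.cong) (use A B C D i j in \<open>auto simp: kron_index\<close>)
  also have "\<dots> = (\<Sum>u\<in>{0..<m}. \<Sum>v\<in>{0..<p}. (A $$ (i div p, u) * B $$ (i mod p, v)) *
       (C $$ (u, j div p) * D $$ (v, j mod p)))"
    unfolding sum_reindex_mult using p by simp
  also have "\<dots> = (\<Sum>u\<in>{0..<m}. A $$ (i div p, u) * C $$ (u, j div p)) *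
       (\<Sum>v\<in>{0..<p}. B $$ (i mod p, v) * D $$ (v, j mod p))"
    by (simp add: sum_product ac_simps)
  also have "\<dots> = (A * C) $$ (i div p, j div p) * (B * D) $$ (i mod p, j mod p)"
    using A B C D id im by (simp add: carrier_matD scalar_prod_def)
  also have "\<dots> = kron (A * C) (B * D) $$ (i,j)"
    using kron_index[OF AC BD i j] by simp
  finally show "(kron A B * kron C D) $$ (i,j) = kron (A * C) (B * D) $$ (i,j)" .
qed



lemma neg_smult_mat: "- (X :: 'a::comm_ring_1 mat) = (- 1) \<cdot>\<^sub>m X"
  by (rule eq_matI) auto

lemma smult_smult_mat: "(k :: 'a::comm_ring_1) \<cdot>\<^sub>m (l \<cdot>\<^sub>m X) = (k * l) \<cdot>\<^sub>m X"
  by (rule eq_matI) (auto simp: mult.assoc)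

context fixes s :: nat begin

lemma cm_mult: "X \<in> carrier_mat s s \<Longrightarrow> Y \<in> carrier_mat s s \<Longrightarrow> X * Y \<in> carrier_mat s s"
  by simp
lemma cm_smult: "X \<in> carrier_mat s s \<Longrightarrow> k \<cdot>\<^sub>m X \<in> carrier_mat s s"
  by simp

lemma assoc_s: "X \<in> carrier_mat s s \<Longrightarrow> Y \<in> carrier_mat s s \<Longrightarrow> Z \<in> carrier_mat s s \<Longrightarrow>
   (X * Y) * Z = X * (Y * Z)" by simp
lemma smult_l_s: "X \<in> carrier_mat s s \<Longrightarrow> Y \<in> carrier_mat s s \<Longrightarrow>
   (k \<cdot>\<^sub>m X) * Y = (k :: 'a::comm_ring_1) \<cdot>\<^sub>m (X * Y)" by (rule mult_smult_assoc_mat)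
lemma smult_r_s: "X \<in> carrier_mat s s \<Longrightarrow> Y \<in> carrier_mat s s \<Longrightarrow>
   X * (k \<cdot>\<^sub>m Y) = (k :: 'a::comm_ring_1) \<cdot>\<^sub>m (X * Y)" by (rule mult_smult_distrib)

lemma ext_rule:
  fixes a b c d :: "'a::comm_ring_1 mat"
  assumes a: "a \<in> carrier_mat s s" and b: "b \<in> carrier_mat s s" and c: "c \<in> carrier_mat s s" and d: "d \<in> carrier_mat s s"
    and e: "a * b = k \<cdot>\<^sub>m (c * d)" and X: "X \<in> carrier_mat s s"
  shows "a * (b * X) = k \<cdot>\<^sub>m (c * (d * X))"
proof -
  have "a * (b * X) = (a * b) * X" using assoc_mult_mat[OF a b X] by simp
  also have "\<dots> = k \<cdot>\<^sub>m ((c * d) * X)" unfolding e using mult_smult_assoc_mat[OF cm_mult[OF c d] X] .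
  also have "(c * d) * X = c * (d * X)" using assoc_mult_mat[OF c d X] .
  finally show ?thesis .
qed

lemma sq_rule:
  fixes a :: "'a::comm_ring_1 mat"
  assumes "a \<in> carrier_mat s s" and e: "a * a = k \<cdot>\<^sub>m 1\<^sub>m s" and X: "X \<in> carrier_mat s s"
  shows "a * (a * X) = k \<cdot>\<^sub>m X"
proof -
  have "a * (a * X) = (a * a) * X" using assoc_mult_mat[OF assms(1) assms(1) X] by simp
  also have "\<dots> = k \<cdot>\<^sub>m (1\<^sub>m s * X)" unfolding e using mult_smult_assoc_mat[OF one_carrier_mat X] .
  finally show ?thesis using X by simp
qed

lemmas norm_rules0 = neg_smult_mat smult_smult_mat assoc_s smult_l_s smult_r_s cm_mult cm_smult
end
lemmas norm_s = assoc_s smult_l_s smult_r_s cm_mult cm_smult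
context fixes s :: nat begin

lemma P1:
  fixes a b :: "'a::field_char_0 mat"
  assumes a: "a \<in> carrier_mat s s" and b: "b \<in> carrier_mat s s"
    and aa: "a * a = (- (1/4)) \<cdot>\<^sub>m 1\<^sub>m s" and bb: "b * b = (- (1/4)) \<cdot>\<^sub>m 1\<^sub>m s"
    and ab: "b * a = (- 1) \<cdot>\<^sub>m (a * b)"
  shows "((- 2) \<cdot>\<^sub>m (a * b)) * ((- 2) \<cdot>\<^sub>m (a * b)) = (- (1/4)) \<cdot>\<^sub>m 1\<^sub>m s"
proof -
  note r = ext_rule[OF b a a b ab] sq_rule[OF a aa] sq_rule[OF b bb] aa bb ab
  have "((- 2) \<cdot>\<^sub>m (a * b)) * ((- 2) \<cdot>\<^sub>m (a * b)) = (- (1/4) * (- (1/4)) * (-1) * 4) \<cdot>\<^sub>m (1\<^sub>m s * 1\<^sub>m s)"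
    using a b by (simp add: norm_rules0 norm_s[where s=s] r)
  then show ?thesis by simp
qed

lemma anti_rule:
  fixes x y :: "'a::comm_ring_1 mat"
  assumes "x * y = - (y * x)"
  shows "y * x = (- 1) \<cdot>\<^sub>m (x * y)"
  unfolding assms neg_smult_mat[symmetric] by simp

lemma comm_rule:
  fixes x y :: "'a::comm_ring_1 mat"
  assumes "x * y = y * x"
  shows "y * x = 1 \<cdot>\<^sub>m (x * y)"
  unfolding assms by simp

end

lemmas norm_rules = neg_smult_mat smult_smult_mat

lemma Cform:
  fixes a b :: "'a::field mat"
  assumes a: "a \<in> carrier_mat s s" and b: "b \<in> carrier_mat s s" and e: "a * b = - (b * a)"
  shows "- comm a b = (- 2) \<cdot>\<^sub>m (a * b)"
proof -
  have ab: "a * b \<in> carrier_mat s s" and ba: "b * a \<in> carrier_mat s s" using a b by auto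
  have e2: "b * a = - (a * b)" using e by simp
  have c: "- comm a b \<in> carrier_mat s s" unfolding comm_def using ab ba by (simp add: minus_carrier_mat)
  show ?thesis unfolding mat_eq_iff_sq[OF c smult_carrier_mat[OF ab]]
    unfolding comm_def e2 using carrier_matD[OF ab] carrier_matD[OF ba] by simp
qed

lemma sp_weyl:
  fixes A :: "nat \<Rightarrow> 'a::field_char_0 mat"
  assumes sl: "simply_laced n adj" and A: "sp n adj s A" and i: "i < n"
  shows "sp n adj s (weyl_twist adj i A)"
proof -
  define T where "T = weyl_twist adj i A"
  define a where "a = A i"
  have Ac: "\<And>j. j < n \<Longrightarrow> A j \<in> carrier_mat s s" using A by (simp add: sp_def)
  have sq: "\<And>j. j < n \<Longrightarrow> A j * A j = (- (1/4)) \<cdot>\<^sub>m 1\<^sub>m s" using A unfolding sp_def by blast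
  have an: "\<And>j k. j < n \<Longrightarrow> k < n \<Longrightarrow> adj j k \<Longrightarrow> A j * A k = - (A k * A j)" using A unfolding sp_def by blast
  have co: "\<And>j k. j < n \<Longrightarrow> k < n \<Longrightarrow> j \<noteq> k \<Longrightarrow> \<not> adj j k \<Longrightarrow> A j * A k = A k * A j" using A unfolding sp_def by blast
  have sym: "\<And>j k. j < n \<Longrightarrow> k < n \<Longrightarrow> adj j k \<longleftrightarrow> adj k j" and irr: "\<And>j. j < n \<Longrightarrow> \<not> adj j j"
    using sl unfolding simply_laced_def by blast+
  have a: "a \<in> carrier_mat s s" using Ac i a_def by simp
  have aa: "a * a = (- (1/4)) \<cdot>\<^sub>m 1\<^sub>m s" using sq i a_def by simp
  have TN: "\<And>j. j < n \<Longrightarrow> j \<noteq> i \<Longrightarrow> adj i j \<Longrightarrow> T j = (- 2) \<cdot>\<^sub>m (a * A j)"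
  proof -
    fix j assume j: "j < n" and ji: "j \<noteq> i" and ij: "adj i j"
    have e: "A i * A j = - (A j * A i)" using an[OF i j ij] .
    show "T j = (- 2) \<cdot>\<^sub>m (a * A j)" unfolding T_def weyl_twist_def a_def
      using Cform[OF Ac[OF i] Ac[OF j] e] ji ij by simp
  qed
  have TU: "\<And>j. j < n \<Longrightarrow> \<not> (j \<noteq> i \<and> adj i j) \<Longrightarrow> T j = A j"
    unfolding T_def weyl_twist_def by auto
  have Tc: "\<And>j. j < n \<Longrightarrow> T j \<in> carrier_mat s s"
  proof -
    fix j assume j: "j < n"
    show "T j \<in> carrier_mat s s"
    proof (cases "j \<noteq> i \<and> adj i j")
      case True then show ?thesis using TN[OF j] Ac[OF j] a by simp
    next
      case False then show ?thesis using TU[OF j] Ac[OF j] by simp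
    qed
  qed
  note dA = carrier_matD[OF a]
  define \<sigma> where "\<sigma> = (\<lambda>p q. if adj p q then (- 1 :: 'a) else 1)"
  have Rel: "\<And>p q. p < n \<Longrightarrow> q < n \<Longrightarrow> p \<noteq> q \<Longrightarrow> A q * A p = \<sigma> p q \<cdot>\<^sub>m (A p * A q)"
  proof -
    fix p q assume p: "p < n" and q: "q < n" and pq: "p \<noteq> q"
    show "A q * A p = \<sigma> p q \<cdot>\<^sub>m (A p * A q)"
    proof (cases "adj p q")
      case True
      then show ?thesis unfolding \<sigma>_def using anti_rule[OF an[OF p q True]] by simp
    next
      case False
      then show ?thesis unfolding \<sigma>_def using comm_rule[OF co[OF p q pq False]] by simp
    qed
  qed
  have Rai: "\<And>p. p < n \<Longrightarrow> p \<noteq> i \<Longrightarrow> adj i p \<Longrightarrow> A p * a = (- 1) \<cdot>\<^sub>m (a * A p)"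
    using Rel i unfolding \<sigma>_def a_def by (metis (full_types))
  have Rci: "\<And>p. p < n \<Longrightarrow> p \<noteq> i \<Longrightarrow> \<not> adj i p \<Longrightarrow> A p * a = 1 \<cdot>\<^sub>m (a * A p)"
    using Rel i unfolding \<sigma>_def a_def by (metis (full_types))
  have main: "\<And>j k. j < n \<Longrightarrow> k < n \<Longrightarrow> j \<noteq> k \<Longrightarrow> T k * T j = \<sigma> j k \<cdot>\<^sub>m (T j * T k)"
  proof -
    fix j k assume j: "j < n" and k: "k < n" and jk: "j \<noteq> k"
    define b where "b = A j"
    define d where "d = A k"
    have b: "b \<in> carrier_mat s s" using Ac j b_def by simp
    have d: "d \<in> carrier_mat s s" using Ac k d_def by simp
    have bb: "b * b = (- (1/4)) \<cdot>\<^sub>m 1\<^sub>m s" using sq j b_def by simp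
    have dd: "d * d = (- (1/4)) \<cdot>\<^sub>m 1\<^sub>m s" using sq k d_def by simp
    have bd: "d * b = \<sigma> j k \<cdot>\<^sub>m (b * d)" using Rel[OF j k jk] b_def d_def by simp
    have db: "b * d = \<sigma> j k \<cdot>\<^sub>m (d * b)" using Rel[OF k j] jk sym[OF j k] b_def d_def \<sigma>_def by auto
    have ss: "\<sigma> j k * \<sigma> j k = 1" unfolding \<sigma>_def by simp
    note dB = carrier_matD[OF b] and dD = carrier_matD[OF d]
    note base = sq_rule[OF a aa] sq_rule[OF b bb] sq_rule[OF d dd] aa bb dd
    show "T k * T j = \<sigma> j k \<cdot>\<^sub>m (T j * T k)"
    proof (cases "j = i")
      case True
      then have ki: "k \<noteq> i" using jk by simp
      have Tj: "T j = a" using TU[OF j] True a_def by simp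
      show ?thesis
      proof (cases "adj i k")
        case ad: True
        have da: "d * a = (- 1) \<cdot>\<^sub>m (a * d)" using Rai[OF k ki ad] d_def by simp
        note r = base ext_rule[OF d a a d da] da
        show ?thesis unfolding Tj TN[OF k ki ad] d_def[symmetric] using a d ad True
          by (simp add: norm_rules norm_s[where s=s] r \<sigma>_def)
      next
        case ad: False
        have Tk: "T k = d" using TU[OF k] ad d_def by simp
        show ?thesis unfolding Tj Tk using bd True a_def b_def by simp
      qed
    next
      case jne: False
      show ?thesis
      proof (cases "k = i")
        case True
        have Tk: "T k = a" using TU[OF k] True a_def by simp
        show ?thesis
        proof (cases "adj i j")
          case ad: True
          have ba: "b * a = (- 1) \<cdot>\<^sub>m (a * b)" using Rai[OF j jne ad] b_def by simp
          note r = base ext_rule[OF b a a b ba] ba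
          have adj': "adj j i" using sym[OF j i] ad by simp
          show ?thesis unfolding Tk TN[OF j jne ad] b_def[symmetric] using a b adj' True
            by (simp add: norm_rules norm_s[where s=s] r \<sigma>_def)
        next
          case ad: False
          have Tj: "T j = b" using TU[OF j] ad b_def by simp
          show ?thesis unfolding Tj Tk using bd True a_def d_def by simp
        qed
      next
        case kne: False
        show ?thesis
        proof (cases "adj i j")
          case adj: True
          have ba: "b * a = (- 1) \<cdot>\<^sub>m (a * b)" using Rai[OF j jne adj] b_def by simp
          have Tj: "T j = (- 2) \<cdot>\<^sub>m (a * b)" using TN[OF j jne adj] b_def by simp
          show ?thesis
          proof (cases "adj i k")
            case adk: True
            have da: "d * a = (- 1) \<cdot>\<^sub>m (a * d)" using Rai[OF k kne adk] d_def by simp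
            have Tk: "T k = (- 2) \<cdot>\<^sub>m (a * d)" using TN[OF k kne adk] d_def by simp
            note r = base ext_rule[OF b a a b ba] ba ext_rule[OF d a a d da] da ext_rule[OF d b b d bd] bd
            show ?thesis unfolding Tj Tk using a b d
              by (simp add: norm_rules norm_s[where s=s] r ac_simps)
          next
            case adk: False
            have da: "d * a = 1 \<cdot>\<^sub>m (a * d)" using Rci[OF k kne adk] d_def by simp
            have Tk: "T k = d" using TU[OF k] adk d_def by simp
            note r = base ext_rule[OF b a a b ba] ba ext_rule[OF d a a d da] da ext_rule[OF d b b d bd] bd
            show ?thesis unfolding Tj Tk using a b d
              by (simp add: norm_rules norm_s[where s=s] r ac_simps)
          qed
        next
          case adj: False
          have ba: "b * a = 1 \<cdot>\<^sub>m (a * b)" using Rci[OF j jne adj] b_def by simp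
          have Tj: "T j = b" using TU[OF j] adj b_def by simp
          show ?thesis
          proof (cases "adj i k")
            case adk: True
            have da: "d * a = (- 1) \<cdot>\<^sub>m (a * d)" using Rai[OF k kne adk] d_def by simp
            have Tk: "T k = (- 2) \<cdot>\<^sub>m (a * d)" using TN[OF k kne adk] d_def by simp
            note r = base ext_rule[OF b a a b ba] ba ext_rule[OF d a a d da] da ext_rule[OF d b b d bd] bd
            show ?thesis unfolding Tj Tk using a b d
              by (simp add: norm_rules norm_s[where s=s] r ac_simps)
          next
            case adk: False
            have Tk: "T k = d" using TU[OF k] adk d_def by simp
            show ?thesis unfolding Tj Tk using bd .
          qed
        qed
      qed
    qed
  qed
  show ?thesis unfolding T_def[symmetric] sp_def
  proof (intro conjI allI impI)
    fix j assume j: "j < n"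
    show "T j \<in> carrier_mat s s" using Tc j .
    show "T j * T j = (- (1/4)) \<cdot>\<^sub>m 1\<^sub>m s"
    proof (cases "j \<noteq> i \<and> adj i j")
      case True
      define b where "b = A j"
      have b: "b \<in> carrier_mat s s" using Ac j b_def by simp
      have bb: "b * b = (- (1/4)) \<cdot>\<^sub>m 1\<^sub>m s" using sq j b_def by simp
      have e: "A i * A j = - (A j * A i)" using an[OF i j] True by blast
      have ab: "b * a = (- 1) \<cdot>\<^sub>m (a * b)" unfolding a_def b_def by (rule anti_rule[OF e])
      note r = ext_rule[OF b a a b ab] sq_rule[OF a aa] sq_rule[OF b bb] aa bb ab
      have Tj: "T j = (- 2) \<cdot>\<^sub>m (a * b)" using TN[OF j] True b_def by simp
      have "T j * T j = (- (1/4) * (- (1/4)) * (-1) * 4) \<cdot>\<^sub>m (1\<^sub>m s * 1\<^sub>m s)"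
        unfolding Tj using a b by (simp add: norm_rules norm_s[where s=s] r)
      then show ?thesis by simp
    next
      case False
      then show ?thesis using TU[OF j False] sq[OF j] by simp
    qed
  next
    fix j k assume j: "j < n" and k: "k < n" and ad: "adj j k"
    have jk: "j \<noteq> k" using ad irr j by blast
    have "T k * T j = (- 1) \<cdot>\<^sub>m (T j * T k)" using main[OF j k jk] ad by (simp add: \<sigma>_def)
    then show "T j * T k = - (T k * T j)" by (simp add: neg_smult_mat smult_smult_mat)
  next
    fix j k assume j: "j < n" and k: "k < n" and ad: "j \<noteq> k \<and> \<not> adj j k"
    show "T j * T k = T k * T j" using main[OF j k] ad by (simp add: \<sigma>_def)
  qed
qed



lemma idx1: "(i::nat) < a * b \<Longrightarrow> i div b < a"
  by (simp add: less_mult_imp_div_less)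
lemma idx2: "(i::nat) < a * b \<Longrightarrow> i mod b < b"
  by (cases b) auto

lemma kron_smult_l: "kron (k \<cdot>\<^sub>m A) B = (k :: 'a::comm_ring_1) \<cdot>\<^sub>m kron A B"
  unfolding kron_def by (rule eq_matI) (auto simp: ac_simps idx1 idx2)

lemma kron_smult_r: "kron A (k \<cdot>\<^sub>m B) = (k :: 'a::comm_ring_1) \<cdot>\<^sub>m kron A B"
  unfolding kron_def by (rule eq_matI) (auto simp: ac_simps idx1 idx2)

lemma kron_neg_l: "kron (- A) B = - kron (A :: 'a::comm_ring_1 mat) B"
  unfolding kron_def by (rule eq_matI) (auto simp: idx1 idx2)

lemma kron_neg_r: "kron A (- B) = - kron (A :: 'a::comm_ring_1 mat) B"
  unfolding kron_def by (rule eq_matI) (auto simp: idx1 idx2)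

lemma kron_one: "kron (1\<^sub>m m) (1\<^sub>m p) = (1\<^sub>m (m * p) :: 'a::comm_ring_1 mat)"
proof (rule eq_matI)
  fix i j assume i: "i < dim_row (1\<^sub>m (m * p) :: 'a mat)" and j: "j < dim_col (1\<^sub>m (m * p) :: 'a mat)"
  then have i: "i < m * p" and j: "j < m * p" by auto
  then have p: "p > 0" by (cases p) auto
  have id: "i div p < m" "j div p < m" using i j p by (auto simp: less_mult_imp_div_less)
  have im: "i mod p < p" "j mod p < p" using p by auto
  have eq: "(i div p = j div p \<and> i mod p = j mod p) \<longleftrightarrow> i = j"
    by (metis div_mult_mod_eq)
  show "kron (1\<^sub>m m) (1\<^sub>m p) $$ (i, j) = (1\<^sub>m (m * p) :: 'a mat) $$ (i, j)"
  proof -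
    have "kron (1\<^sub>m m) (1\<^sub>m p) $$ (i, j) = (if i div p = j div p then 1 else 0) * (if i mod p = j mod p then (1::'a) else 0)"
      using kron_index[OF one_carrier_mat one_carrier_mat i j] id im by simp
    also have "\<dots> = (if i = j then 1 else 0)" using eq by (auto split: if_splits)
    also have "\<dots> = (1\<^sub>m (m * p) :: 'a mat) $$ (i, j)" using i j by simp
    finally show ?thesis .
  qed
qed (simp_all add: kron_def)

lemma neg_smult_mat6: "- (X :: 'a::comm_ring_1 mat) = (- 1) \<cdot>\<^sub>m X"
  by (rule eq_matI) auto

lemma smult_smult_mat6: "(k :: 'a::comm_ring_1) \<cdot>\<^sub>m (l \<cdot>\<^sub>m X) = (k * l) \<cdot>\<^sub>m X"
  by (rule eq_matI) (auto simp: mult.assoc)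

lemma sp_kron:
  fixes A1 A2 A3 :: "nat \<Rightarrow> 'a::field_char_0 mat"
  assumes A1: "sp n adj s1 A1" and A2: "sp n adj s2 A2" and A3: "sp n adj s3 A3"
  shows "sp n adj (s1 * s2 * s3) (\<lambda>i. 4 \<cdot>\<^sub>m kron (kron (A1 i) (A2 i)) (A3 i))"
proof -
  define K where "K = (\<lambda>i. 4 \<cdot>\<^sub>m kron (kron (A1 i) (A2 i)) (A3 i))"
  have c1: "\<And>i. i < n \<Longrightarrow> A1 i \<in> carrier_mat s1 s1" using A1 by (simp add: sp_def)
  have c2: "\<And>i. i < n \<Longrightarrow> A2 i \<in> carrier_mat s2 s2" using A2 by (simp add: sp_def)
  have c3: "\<And>i. i < n \<Longrightarrow> A3 i \<in> carrier_mat s3 s3" using A3 by (simp add: sp_def)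
  have KK: "\<And>i j. i < n \<Longrightarrow> j < n \<Longrightarrow>
     K i * K j = 16 \<cdot>\<^sub>m kron (kron (A1 i * A1 j) (A2 i * A2 j)) (A3 i * A3 j)"
  proof -
    fix i j assume i: "i < n" and j: "j < n"
    have k12i: "kron (A1 i) (A2 i) \<in> carrier_mat (s1*s2) (s1*s2)" using kron_carrier_sq c1 c2 i by blast
    have k12j: "kron (A1 j) (A2 j) \<in> carrier_mat (s1*s2) (s1*s2)" using kron_carrier_sq c1 c2 j by blast
    have ki: "kron (kron (A1 i) (A2 i)) (A3 i) \<in> carrier_mat (s1*s2*s3) (s1*s2*s3)"
      using kron_carrier_sq[OF k12i c3[OF i]] .
    have kj: "kron (kron (A1 j) (A2 j)) (A3 j) \<in> carrier_mat (s1*s2*s3) (s1*s2*s3)"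
      using kron_carrier_sq[OF k12j c3[OF j]] .
    have "K i * K j = 4 \<cdot>\<^sub>m (kron (kron (A1 i) (A2 i)) (A3 i) * (4 \<cdot>\<^sub>m kron (kron (A1 j) (A2 j)) (A3 j)))"
      unfolding K_def by (rule mult_smult_assoc_mat[OF ki smult_carrier_mat[OF kj]])
    also have "\<dots> = 16 \<cdot>\<^sub>m (kron (kron (A1 i) (A2 i)) (A3 i) * kron (kron (A1 j) (A2 j)) (A3 j))"
      unfolding mult_smult_distrib[OF ki kj] smult_smult_mat6 by simp
    also have "kron (kron (A1 i) (A2 i)) (A3 i) * kron (kron (A1 j) (A2 j)) (A3 j)
        = kron (kron (A1 i) (A2 i) * kron (A1 j) (A2 j)) (A3 i * A3 j)"
      by (rule kron_mult[OF k12i k12j c3[OF i] c3[OF j]])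
    also have "kron (A1 i) (A2 i) * kron (A1 j) (A2 j) = kron (A1 i * A1 j) (A2 i * A2 j)"
      by (rule kron_mult[OF c1[OF i] c1[OF j] c2[OF i] c2[OF j]])
    finally show "K i * K j = 16 \<cdot>\<^sub>m kron (kron (A1 i * A1 j) (A2 i * A2 j)) (A3 i * A3 j)" .
  qed
  show ?thesis unfolding K_def[symmetric] sp_def
  proof (intro conjI allI impI)
    fix i assume i: "i < n"
    have k12i: "kron (A1 i) (A2 i) \<in> carrier_mat (s1*s2) (s1*s2)" using kron_carrier_sq c1 c2 i by blast
    show "K i \<in> carrier_mat (s1 * s2 * s3) (s1 * s2 * s3)"
      unfolding K_def using kron_carrier_sq[OF k12i c3[OF i]] by simp
    have q1: "A1 i * A1 i = (- (1/4)) \<cdot>\<^sub>m 1\<^sub>m s1" using A1 i unfolding sp_def by blast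
    have q2: "A2 i * A2 i = (- (1/4)) \<cdot>\<^sub>m 1\<^sub>m s2" using A2 i unfolding sp_def by blast
    have q3: "A3 i * A3 i = (- (1/4)) \<cdot>\<^sub>m 1\<^sub>m s3" using A3 i unfolding sp_def by blast
    show "K i * K i = (- (1/4)) \<cdot>\<^sub>m 1\<^sub>m (s1 * s2 * s3)"
      unfolding KK[OF i i] q1 q2 q3 kron_smult_l kron_smult_r kron_one smult_smult_mat6 by simp
  next
    fix i j assume i: "i < n" and j: "j < n" and ad: "adj i j"
    have q1: "A1 i * A1 j = - (A1 j * A1 i)" using A1 i j ad unfolding sp_def by blast
    have q2: "A2 i * A2 j = - (A2 j * A2 i)" using A2 i j ad unfolding sp_def by blast
    have q3: "A3 i * A3 j = - (A3 j * A3 i)" using A3 i j ad unfolding sp_def by blast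
    show "K i * K j = - (K j * K i)"
      unfolding KK[OF i j] KK[OF j i] q1 q2 q3 neg_smult_mat6[of "_ * _"] kron_smult_l kron_smult_r
        smult_smult_mat6 neg_smult_mat6[of "_ \<cdot>\<^sub>m _"] by simp
  next
    fix i j assume i: "i < n" and j: "j < n" and ad: "i \<noteq> j \<and> \<not> adj i j"
    have q1: "A1 i * A1 j = A1 j * A1 i" using A1 i j ad unfolding sp_def by blast
    have q2: "A2 i * A2 j = A2 j * A2 i" using A2 i j ad unfolding sp_def by blast
    have q3: "A3 i * A3 j = A3 j * A3 i" using A3 i j ad unfolding sp_def by blast
    show "K i * K j = K j * K i"
      unfolding KK[OF i j] KK[OF j i] q1 q2 q3 ..
  qed
qed



lemma dsum_mult:
  fixes X1 X2 Y1 Y2 :: "'a::comm_ring_1 mat"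
  assumes X1: "X1 \<in> carrier_mat s1 s1" and X2: "X2 \<in> carrier_mat s1 s1"
    and Y1: "Y1 \<in> carrier_mat s2 s2" and Y2: "Y2 \<in> carrier_mat s2 s2"
  shows "direct_sum_mat X1 Y1 * direct_sum_mat X2 Y2 = direct_sum_mat (X1 * X2) (Y1 * Y2)"
proof -
  have d: "dim_row X1 = s1" "dim_col X1 = s1" "dim_row X2 = s1" "dim_col X2 = s1"
    "dim_row Y1 = s2" "dim_col Y1 = s2" "dim_row Y2 = s2" "dim_col Y2 = s2"
    using X1 X2 Y1 Y2 by auto
  have XX: "X1 * X2 \<in> carrier_mat s1 s1" and YY: "Y1 * Y2 \<in> carrier_mat s2 s2" using X1 X2 Y1 Y2 by auto
  have "direct_sum_mat X1 Y1 * direct_sum_mat X2 Y2 =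
     four_block_mat (X1 * X2 + 0\<^sub>m s1 s2 * 0\<^sub>m s2 s1) (X1 * 0\<^sub>m s1 s2 + 0\<^sub>m s1 s2 * Y2)
       (0\<^sub>m s2 s1 * X2 + Y1 * 0\<^sub>m s2 s1) (0\<^sub>m s2 s1 * 0\<^sub>m s1 s2 + Y1 * Y2)"
    unfolding direct_sum_mat_def d
    by (rule mult_four_block_mat[OF X1 zero_carrier_mat zero_carrier_mat Y1 X2 zero_carrier_mat zero_carrier_mat Y2])
  also have "\<dots> = four_block_mat (X1 * X2) (0\<^sub>m s1 s2) (0\<^sub>m s2 s1) (Y1 * Y2)"
    using XX YY d by (simp add: left_mult_zero_mat right_mult_zero_mat)
  also have "\<dots> = direct_sum_mat (X1 * X2) (Y1 * Y2)"
    unfolding direct_sum_mat_def using d by simp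
  finally show ?thesis .
qed

lemma dsum_neg:
  fixes X Y :: "'a::comm_ring_1 mat"
  shows "direct_sum_mat (- X) (- Y) = - direct_sum_mat X Y"
  unfolding direct_sum_mat_def by (rule eq_matI) auto

lemma dsum_one:
  "direct_sum_mat (k \<cdot>\<^sub>m 1\<^sub>m s1) (k \<cdot>\<^sub>m 1\<^sub>m s2) = (k :: 'a::comm_ring_1) \<cdot>\<^sub>m 1\<^sub>m (s1 + s2)"
  unfolding direct_sum_mat_def by (rule eq_matI) auto

lemma sp_dsum:
  fixes A1 A2 :: "nat \<Rightarrow> 'a::field_char_0 mat"
  assumes A1: "sp n adj s1 A1" and A2: "sp n adj s2 A2"
  shows "sp n adj (s1 + s2) (\<lambda>i. direct_sum_mat (A1 i) (A2 i))"
proof -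
  have c1: "\<And>i. i < n \<Longrightarrow> A1 i \<in> carrier_mat s1 s1" using A1 by (simp add: sp_def)
  have c2: "\<And>i. i < n \<Longrightarrow> A2 i \<in> carrier_mat s2 s2" using A2 by (simp add: sp_def)
  show ?thesis unfolding sp_def
  proof (intro conjI allI impI)
    fix i assume i: "i < n"
    show "direct_sum_mat (A1 i) (A2 i) \<in> carrier_mat (s1 + s2) (s1 + s2)"
      unfolding direct_sum_mat_def using c1[OF i] c2[OF i] by (simp add: carrier_matD)
    have q1: "A1 i * A1 i = (- (1/4)) \<cdot>\<^sub>m 1\<^sub>m s1" using A1 i unfolding sp_def by blast
    have q2: "A2 i * A2 i = (- (1/4)) \<cdot>\<^sub>m 1\<^sub>m s2" using A2 i unfolding sp_def by blast
    show "direct_sum_mat (A1 i) (A2 i) * direct_sum_mat (A1 i) (A2 i) = (- (1/4)) \<cdot>\<^sub>m 1\<^sub>m (s1 + s2)"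
      unfolding dsum_mult[OF c1[OF i] c1[OF i] c2[OF i] c2[OF i]] q1 q2 dsum_one ..
  next
    fix i j assume i: "i < n" and j: "j < n" and ad: "adj i j"
    have q1: "A1 i * A1 j = - (A1 j * A1 i)" using A1 i j ad unfolding sp_def by blast
    have q2: "A2 i * A2 j = - (A2 j * A2 i)" using A2 i j ad unfolding sp_def by blast
    show "direct_sum_mat (A1 i) (A2 i) * direct_sum_mat (A1 j) (A2 j) =
        - (direct_sum_mat (A1 j) (A2 j) * direct_sum_mat (A1 i) (A2 i))"
      unfolding dsum_mult[OF c1[OF i] c1[OF j] c2[OF i] c2[OF j]]
        dsum_mult[OF c1[OF j] c1[OF i] c2[OF j] c2[OF i]] q1 q2 dsum_neg ..
  next
    fix i j assume i: "i < n" and j: "j < n" and ad: "i \<noteq> j \<and> \<not> adj i j"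
    have q1: "A1 i * A1 j = A1 j * A1 i" using A1 i j ad unfolding sp_def by blast
    have q2: "A2 i * A2 j = A2 j * A2 i" using A2 i j ad unfolding sp_def by blast
    show "direct_sum_mat (A1 i) (A2 i) * direct_sum_mat (A1 j) (A2 j) =
        direct_sum_mat (A1 j) (A2 j) * direct_sum_mat (A1 i) (A2 i)"
      unfolding dsum_mult[OF c1[OF i] c1[OF j] c2[OF i] c2[OF j]]
        dsum_mult[OF c1[OF j] c1[OF i] c2[OF j] c2[OF i]] q1 q2 ..
  qed
qed


theorem mainTheorem7:
  fixes n :: nat and adj :: "nat \<Rightarrow> nat \<Rightarrow> bool"
  assumes sl: "simply_laced n adj"
    and imag: "\<exists>I :: 'a::field_char_0. I * I = - 1"
  shows
    \<comment> \<open>(a) direct sums\<close>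
    "(\<forall>s1 s2 (A1 :: nat \<Rightarrow> 'a mat) A2. gen_spin n adj s1 A1 \<and> gen_spin n adj s2 A2 \<longrightarrow>
        gen_spin n adj (s1 + s2) (\<lambda>i. direct_sum_mat (A1 i) (A2 i)))
   \<and> \<comment> \<open>(a) quotients\<close>
    (\<forall>s t (A :: nat \<Rightarrow> 'a mat) B Q. gen_spin n adj s A \<and> Q \<in> carrier_mat t s \<and>
        (\<forall>w \<in> carrier_vec t. \<exists>v \<in> carrier_vec s. Q *\<^sub>v v = w) \<and>
        (\<forall>i<n. B i \<in> carrier_mat t t \<and> Q * A i = B i * Q) \<longrightarrow> gen_spin n adj t B)
   \<and> \<comment> \<open>(a) duals\<close>
    (\<forall>s (A :: nat \<Rightarrow> 'a mat). gen_spin n adj s A \<longrightarrow>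
        gen_spin n adj s (\<lambda>i. - transpose_mat (A i)))
   \<and> \<comment> \<open>(a) subrepresentations\<close>
    (\<forall>s t (A :: nat \<Rightarrow> 'a mat) B P. gen_spin n adj s A \<and> P \<in> carrier_mat s t \<and>
        (\<forall>v \<in> carrier_vec t. P *\<^sub>v v = 0\<^sub>v s \<longrightarrow> v = 0\<^sub>v t) \<and>
        (\<forall>i<n. B i \<in> carrier_mat t t \<and> A i * P = P * B i) \<longrightarrow> gen_spin n adj t B)
   \<and> \<comment> \<open>(b) triple tensor products\<close>
    (\<forall>s1 s2 s3 (A1 :: nat \<Rightarrow> 'a mat) A2 A3.
        gen_spin n adj s1 A1 \<and> gen_spin n adj s2 A2 \<and> gen_spin n adj s3 A3 \<longrightarrow>
        gen_spin n adj (s1 * s2 * s3) (\<lambda>i. 4 \<cdot>\<^sub>m kron (kron (A1 i) (A2 i)) (A3 i)))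
   \<and> \<comment> \<open>(c) sign automorphisms\<close>
    (\<forall>s (A :: nat \<Rightarrow> 'a mat) (\<epsilon> :: nat \<Rightarrow> 'a). gen_spin n adj s A \<and> (\<forall>i<n. \<epsilon> i = 1 \<or> \<epsilon> i = - 1) \<longrightarrow>
        gen_spin n adj s (\<lambda>i. \<epsilon> i \<cdot>\<^sub>m A i))
   \<and> \<comment> \<open>(c) graph automorphisms\<close>
    (\<forall>s (A :: nat \<Rightarrow> 'a mat) \<pi>. gen_spin n adj s A \<and> bij_betw \<pi> {0..<n} {0..<n} \<and>
        (\<forall>i<n. \<forall>j<n. adj (\<pi> i) (\<pi> j) \<longleftrightarrow> adj i j) \<longrightarrow>
        gen_spin n adj s (\<lambda>i. A (\<pi> i)))
   \<and> \<comment> \<open>(c) Weyl group automorphisms (products of generators s_i^*)\<close>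
    (\<forall>s (A :: nat \<Rightarrow> 'a mat) (w :: nat list). gen_spin n adj s A \<and> set w \<subseteq> {0..<n} \<longrightarrow>
        gen_spin n adj s (fold (weyl_twist adj) w A))"
  proof -
  have fold_lem: "\<And>w (A :: nat \<Rightarrow> 'a mat). set w \<subseteq> {0..<n} \<Longrightarrow> sp n adj s A \<Longrightarrow>
      sp n adj s (fold (weyl_twist adj) w A)" for s
  proof -
    fix w and A :: "nat \<Rightarrow> 'a mat"
    show "set w \<subseteq> {0..<n} \<Longrightarrow> sp n adj s A \<Longrightarrow> sp n adj s (fold (weyl_twist adj) w A)"
    proof (induction w arbitrary: A)
      case Nil
      then show ?case by simp
    next
      case (Cons x xs)
      have x: "x < n" using Cons.prems by auto
      have "sp n adj s (weyl_twist adj x A)" by (rule sp_weyl[OF sl Cons.prems(2) x])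
      then show ?case using Cons.IH Cons.prems by simp
    qed
  qed
  show ?thesis unfolding gen_spin_iff
  proof (intro conjI allI impI; (elim conjE)?)
    fix s1 s2 and A1 A2 :: "nat \<Rightarrow> 'a mat"
    assume "sp n adj s1 A1" "sp n adj s2 A2"
    then show "sp n adj (s1 + s2) (\<lambda>i. direct_sum_mat (A1 i) (A2 i))" by (rule sp_dsum)
  next
    fix s t and A B :: "nat \<Rightarrow> 'a mat" and Q
    assume "sp n adj s A" "Q \<in> carrier_mat t s" "\<forall>w\<in>carrier_vec t. \<exists>v\<in>carrier_vec s. Q *\<^sub>v v = w"
      "\<forall>i<n. B i \<in> carrier_mat t t \<and> Q * A i = B i * Q"
    then show "sp n adj t B" by (rule sp_quot)
  next
    fix s and A :: "nat \<Rightarrow> 'a mat"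
    assume "sp n adj s A"
    then show "sp n adj s (\<lambda>i. - transpose_mat (A i))" by (rule sp_dual)
  next
    fix s t and A B :: "nat \<Rightarrow> 'a mat" and P
    assume "sp n adj s A" "P \<in> carrier_mat s t" "\<forall>v\<in>carrier_vec t. P *\<^sub>v v = 0\<^sub>v s \<longrightarrow> v = 0\<^sub>v t"
      "\<forall>i<n. B i \<in> carrier_mat t t \<and> A i * P = P * B i"
    then show "sp n adj t B" by (rule sp_sub)
  next
    fix s1 s2 s3 and A1 A2 A3 :: "nat \<Rightarrow> 'a mat"
    assume "sp n adj s1 A1" "sp n adj s2 A2" "sp n adj s3 A3"
    then show "sp n adj (s1 * s2 * s3) (\<lambda>i. 4 \<cdot>\<^sub>m kron (kron (A1 i) (A2 i)) (A3 i))" by (rule sp_kron)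
  next
    fix s and A :: "nat \<Rightarrow> 'a mat" and \<epsilon> :: "nat \<Rightarrow> 'a"
    assume "sp n adj s A" "\<forall>i<n. \<epsilon> i = 1 \<or> \<epsilon> i = - 1"
    then show "sp n adj s (\<lambda>i. \<epsilon> i \<cdot>\<^sub>m A i)" by (rule sp_sign)
  next
    fix s and A :: "nat \<Rightarrow> 'a mat" and \<pi>
    assume "sp n adj s A" "bij_betw \<pi> {0..<n} {0..<n}" "\<forall>i<n. \<forall>j<n. adj (\<pi> i) (\<pi> j) = adj i j"
    then show "sp n adj s (\<lambda>i. A (\<pi> i))" by (rule sp_graph)
  next
    fix s and A :: "nat \<Rightarrow> 'a mat" and w :: "nat list"
    assume "sp n adj s A" "set w \<subseteq> {0..<n}"
    then show "sp n adj s (fold (weyl_twist adj) w A)" using fold_lem by blast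
  qed
qed

end
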